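(* Let $(M_\alpha,\varphi_{\alpha\beta})$ be an inverse system, indexed by a countable upward directed poset, of injective $\mathbb{Z}$-modules and surjective homomorphisms $\varphi_{\alpha\beta}:M_\beta\to M_\alpha$, and let $M$ be its inverse limit. Let $M_{\mathrm{div}}$ be the largest divisible submodule of $M$, i.e. the sum of the images of all $\mathbb{Z}$-module homomorphisms $\mathbb{Q}\to M$. Then for every index $\alpha$, the composite $M_{\mathrm{div}}\hookrightarrow M\to M_\alpha$ (with $M\to M_\alpha$ the canonical projection) is surjective.
   Context: For $\mathbb{Z}$-modules (abelian groups), injective is equivalent to divisible. *)

theory Defs
  imports "HOL-Algebra.Algebra" "HOL-Library.Countable_Set"
begin

definition rational_group :: "rat monoid"
  where "rational_group = \<lparr>carrier = UNIV, monoid.mult = (+), one = (0::rat)\<rparr>"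

text \<open>Divisible abelian group (for Z-modules: injective iff divisible).\<close>
definition divisible_group :: "('a, 'c) monoid_scheme \<Rightarrow> bool"
  where "divisible_group G \<longleftrightarrow>
     comm_group G \<and>
     (\<forall>x\<in>carrier G. \<forall>n::nat. n > 0 \<longrightarrow> (\<exists>y\<in>carrier G. y [^]\<^bsub>G\<^esub> n = x))"

definition inverse_system :: "('i::order \<Rightarrow> ('a, 'c) monoid_scheme) \<Rightarrow> ('i \<Rightarrow> 'i \<Rightarrow> 'a \<Rightarrow> 'a) \<Rightarrow> bool"
  where "inverse_system G \<phi> \<longleftrightarrow>
     (\<forall>i. comm_group (G i)) \<and>
     (\<forall>i j. i \<le> j \<longrightarrow> \<phi> i j \<in> hom (G j) (G i)) \<and>
     (\<forall>i. \<forall>x\<in>carrier (G i). \<phi> i i x = x) \<and>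
     (\<forall>i j k. i \<le> j \<longrightarrow> j \<le> k \<longrightarrow> (\<forall>x\<in>carrier (G k). \<phi> i j (\<phi> j k x) = \<phi> i k x))"

definition inverse_limit :: "('i::order \<Rightarrow> ('a, 'c) monoid_scheme) \<Rightarrow> ('i \<Rightarrow> 'i \<Rightarrow> 'a \<Rightarrow> 'a) \<Rightarrow> ('i \<Rightarrow> 'a) monoid"
  where "inverse_limit G \<phi> =
     \<lparr>carrier = {x \<in> carrier (product_group UNIV G). \<forall>i j. i \<le> j \<longrightarrow> \<phi> i j (x j) = x i},
      monoid.mult = monoid.mult (product_group UNIV G),
      one = one (product_group UNIV G)\<rparr>"

definition divisible_part :: "('b, 'c) monoid_scheme \<Rightarrow> 'b set"
  where "divisible_part M = generate M (\<Union>h \<in> hom rational_group M. h ` carrier rational_group)"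

end

theory Submission
  imports Defs
begin

lemma limit_group:
  assumes IS: "inverse_system G \<phi>"
  shows "group (inverse_limit G \<phi>)"
proof -
  let ?P = "product_group UNIV G"
  let ?S = "carrier (inverse_limit G \<phi>)"
  have grp: "\<And>i. group (G i)" using IS unfolding inverse_system_def comm_group_def by auto
  have hom: "\<And>i j. i \<le> j \<Longrightarrow> \<phi> i j \<in> hom (G j) (G i)" using IS unfolding inverse_system_def by auto
  have gh: "\<And>i j. i \<le> j \<Longrightarrow> group_hom (G j) (G i) (\<phi> i j)"
    using hom grp by (simp add: group_hom_def group_hom_axioms_def)
  have PG: "group ?P" using grp by simp
  have eq: "inverse_limit G \<phi> = ?P\<lparr>carrier := ?S\<rparr>"
    by (simp add: inverse_limit_def product_group_def)
  have S: "?S = {x \<in> carrier ?P. \<forall>i j. i \<le> j \<longrightarrow> \<phi> i j (x j) = x i}"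
    by (simp add: inverse_limit_def)
  have "subgroup ?S ?P"
  proof (rule group.subgroupI[OF PG])
    show "?S \<subseteq> carrier ?P" using S by blast
    have "\<one>\<^bsub>?P\<^esub> \<in> ?S"
      unfolding S using gh grp by (auto simp: group_hom.hom_one group.is_monoid)
    then show "?S \<noteq> {}" by blast
  next
    fix a assume a: "a \<in> ?S"
    then have ac: "a \<in> carrier ?P" and th: "\<And>i j. i \<le> j \<Longrightarrow> \<phi> i j (a j) = a i" using S by auto
    have inv: "inv\<^bsub>?P\<^esub> a = (\<lambda>i\<in>UNIV. inv\<^bsub>G i\<^esub> a i)"
      using ac grp by (simp add: inv_product_group)
    have ai: "\<And>i. a i \<in> carrier (G i)" using ac by auto
    have "\<And>i j. i \<le> j \<Longrightarrow> \<phi> i j (inv\<^bsub>G j\<^esub> a j) = inv\<^bsub>G i\<^esub> a i"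
      using group_hom.hom_inv[OF gh] th ai by metis
    with ai show "inv\<^bsub>?P\<^esub> a \<in> ?S" unfolding S inv
      using grp by (auto simp: group.inv_closed PiE_UNIV_domain)
  next
    fix a b assume a: "a \<in> ?S" and b: "b \<in> ?S"
    then have ac: "a \<in> carrier ?P" "b \<in> carrier ?P" and th: "\<And>i j. i \<le> j \<Longrightarrow> \<phi> i j (a j) = a i"
      "\<And>i j. i \<le> j \<Longrightarrow> \<phi> i j (b j) = b i" using S by auto
    have ai: "\<And>i. a i \<in> carrier (G i)" "\<And>i. b i \<in> carrier (G i)" using ac by auto
    have "\<And>i j. i \<le> j \<Longrightarrow> \<phi> i j (a j \<otimes>\<^bsub>G j\<^esub> b j) = a i \<otimes>\<^bsub>G i\<^esub> b i"
      using group_hom.hom_mult[OF gh] th ai by metis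
    with ai show "a \<otimes>\<^bsub>?P\<^esub> b \<in> ?S" unfolding S
      using grp by (auto simp: monoid.m_closed group.is_monoid PiE_UNIV_domain)
  qed
  then show ?thesis using eq subgroup.subgroup_is_group[OF _ PG] by metis
qed



theorem corollary6:
  fixes G :: "'i::order \<Rightarrow> ('a, 'c) monoid_scheme"
    and \<phi> :: "'i \<Rightarrow> 'i \<Rightarrow> 'a \<Rightarrow> 'a"
    and \<alpha> :: 'i
  assumes "countable (UNIV :: 'i set)"
    and "\<forall>a b :: 'i. \<exists>c. a \<le> c \<and> b \<le> c"
    and "inverse_system G \<phi>"
    and "\<forall>i. divisible_group (G i)"
    and "\<forall>i j. i \<le> j \<longrightarrow> \<phi> i j ` carrier (G j) = carrier (G i)"
  shows "(\<lambda>x. x \<alpha>) ` divisible_part (inverse_limit G \<phi>) = carrier (G \<alpha>)"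
proof -
  note IS = assms(3)
  let ?M = "inverse_limit G \<phi>"
  let ?H = "\<Union>h \<in> hom rational_group ?M. h ` carrier rational_group"
  have grp: "\<And>i. group (G i)" using IS unfolding inverse_system_def comm_group_def by auto
  have hom: "\<And>i j. i \<le> j \<Longrightarrow> \<phi> i j \<in> hom (G j) (G i)" using IS unfolding inverse_system_def by auto
  have gh: "\<And>i j. i \<le> j \<Longrightarrow> group_hom (G j) (G i) (\<phi> i j)"
    using hom grp by (simp add: group_hom_def group_hom_axioms_def)
  have cl: "\<And>i j y. i \<le> j \<Longrightarrow> y \<in> carrier (G j) \<Longrightarrow> \<phi> i j y \<in> carrier (G i)"
    using hom by (meson hom_in_carrier)
  have idm: "\<And>i y. y \<in> carrier (G i) \<Longrightarrow> \<phi> i i y = y" using IS unfolding inverse_system_def by auto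
  have comp: "\<And>i j k y. i \<le> j \<Longrightarrow> j \<le> k \<Longrightarrow> y \<in> carrier (G k) \<Longrightarrow> \<phi> i j (\<phi> j k y) = \<phi> i k y"
    using IS unfolding inverse_system_def by auto
  have S: "carrier ?M = {x \<in> carrier (product_group UNIV G). \<forall>i j. i \<le> j \<longrightarrow> \<phi> i j (x j) = x i}"
    by (simp add: inverse_limit_def)
  have Mgrp: "group ?M" by (rule limit_group[OF IS])
  show ?thesis
  proof
    have "?H \<subseteq> carrier ?M" by (auto simp: hom_def)
    then have "divisible_part ?M \<subseteq> carrier ?M"
      unfolding divisible_part_def using group.generate_incl[OF Mgrp] by blast
    then show "(\<lambda>x. x \<alpha>) ` divisible_part ?M \<subseteq> carrier (G \<alpha>)"
      unfolding S by auto
  next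
    show "carrier (G \<alpha>) \<subseteq> (\<lambda>x. x \<alpha>) ` divisible_part ?M"
    proof
      fix x assume x: "x \<in> carrier (G \<alpha>)"
      have "\<exists>h \<in> hom rational_group ?M. h 1 \<alpha> = x"
      proof -
        have "UNIV \<noteq> ({} :: 'i set)" by simp
        then obtain e :: "nat \<Rightarrow> 'i" where e: "range e = UNIV"
          using range_from_nat_into[OF _ assms(1)] by blast
        define ub where "ub = (\<lambda>a b::'i. SOME c. a \<le> c \<and> b \<le> c)"
        have ub: "\<And>a b. a \<le> ub a b \<and> b \<le> ub a b"
          unfolding ub_def using assms(2) by (metis (mono_tags, lifting) someI_ex)
        define c where "c = rec_nat \<alpha> (\<lambda>n a. ub a (e n))"
        have c0: "c 0 = \<alpha>" and cS: "\<And>n. c (Suc n) = ub (c n) (e n)" by (simp_all add: c_def)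
        have cmono1: "\<And>n. c n \<le> c (Suc n)" using ub cS by metis
        have cmono: "\<And>n m. n \<le> m \<Longrightarrow> c n \<le> c m" using lift_Suc_mono_le[of c] cmono1 by blast
        have cof: "\<And>i. \<exists>N. i \<le> c N"
        proof -
          fix i
          obtain n where "i = e n" using e by (metis UNIV_I imageE)
          then have "i \<le> c (Suc n)" using ub cS by metis
          then show "\<exists>N. i \<le> c N" by blast
        qed
        define P where "P = (\<lambda>n v y. y \<in> carrier (G (c (Suc n))) \<and>
             \<phi> (c n) (c (Suc n)) (y [^]\<^bsub>G (c (Suc n))\<^esub> (Suc n)) = v)"
        have step: "\<And>n v. v \<in> carrier (G (c n)) \<Longrightarrow> \<exists>y. P n v y"
        proof -
          fix n v assume v: "v \<in> carrier (G (c n))"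
          obtain z where z: "z \<in> carrier (G (c (Suc n)))" "\<phi> (c n) (c (Suc n)) z = v"
            using assms(5) cmono1 v by (metis imageE)
          obtain y where "y \<in> carrier (G (c (Suc n)))" "y [^]\<^bsub>G (c (Suc n))\<^esub> (Suc n) = z"
            using assms(4) z(1) unfolding divisible_group_def by (meson zero_less_Suc)
          then show "\<exists>y. P n v y" using z unfolding P_def by blast
        qed
        define u where "u = rec_nat x (\<lambda>n v. SOME y. P n v y)"
        have u0: "u 0 = x" by (simp add: u_def)
        have uS: "\<And>n. u (Suc n) = (SOME y. P n (u n) y)" by (simp add: u_def)
        have uc: "\<And>n. u n \<in> carrier (G (c n))"
        proof -
          fix n show "u n \<in> carrier (G (c n))"
          proof (induct n)
            case 0 then show ?case using u0 c0 x by simp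
          next
            case (Suc n) then show ?case using uS someI_ex[OF step[OF Suc]] unfolding P_def by metis
          qed
        qed
        have urel: "\<And>n. \<phi> (c n) (c (Suc n)) (u (Suc n) [^]\<^bsub>G (c (Suc n))\<^esub> (Suc n)) = u n"
          using uS someI_ex[OF step[OF uc]] unfolding P_def by metis
        have R: "\<And>n m. n \<le> m \<Longrightarrow> u n = \<phi> (c n) (c m) (u m [^]\<^bsub>G (c m)\<^esub> (fact m div fact n :: nat))"
        proof -
          fix n m :: nat assume "n \<le> m"
          then show "u n = \<phi> (c n) (c m) (u m [^]\<^bsub>G (c m)\<^esub> (fact m div fact n :: nat))"
          proof (induction m rule: dec_induct)
            case base
            have "u n [^]\<^bsub>G (c n)\<^esub> (1::nat) = u n"
              using uc monoid.l_one[OF group.is_monoid[OF grp]] by (simp add: monoid.nat_pow_Suc[OF group.is_monoid[OF grp]] monoid.nat_pow_0[OF group.is_monoid[OF grp]])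
            then show ?case using idm uc by simp
          next
            case (step m)
            let ?k = "fact m div fact n :: nat"
            let ?w = "u (Suc m) [^]\<^bsub>G (c (Suc m))\<^esub> (Suc m * ?k)"
            have wc: "?w \<in> carrier (G (c (Suc m)))"
              using uc monoid.nat_pow_closed[OF group.is_monoid[OF grp]] by blast
            have "u m [^]\<^bsub>G (c m)\<^esub> ?k
                = \<phi> (c m) (c (Suc m)) ((u (Suc m) [^]\<^bsub>G (c (Suc m))\<^esub> (Suc m)) [^]\<^bsub>G (c (Suc m))\<^esub> ?k)"
              using group_hom.hom_nat_pow[OF gh[OF cmono1], of "u (Suc m) [^]\<^bsub>G (c (Suc m))\<^esub> (Suc m)" m ?k]
                urel[of m] uc monoid.nat_pow_closed[OF group.is_monoid[OF grp]] by metis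
            also have "\<dots> = \<phi> (c m) (c (Suc m)) ?w"
              using monoid.nat_pow_pow[OF group.is_monoid[OF grp] uc] by metis
            finally have 1: "u m [^]\<^bsub>G (c m)\<^esub> ?k = \<phi> (c m) (c (Suc m)) ?w" .
            have 2: "Suc m * ?k = fact (Suc m) div fact n"
              using div_mult_swap[OF fact_dvd[OF step(1)], of "Suc m"] by (simp add: fact_Suc)
            have "u n = \<phi> (c n) (c m) (\<phi> (c m) (c (Suc m)) ?w)" using step(3) 1 by simp
            also have "\<dots> = \<phi> (c n) (c (Suc m)) ?w"
              using comp[OF cmono[OF step(1)] cmono1 wc] .
            finally show ?case using 2 by simp
          qed
        qed
        define V where "V = (\<lambda>i N (q::rat). \<phi> i (c N) (u N [^]\<^bsub>G (c N)\<^esub> \<lfloor>q * fact N\<rfloor>))"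
        define valid where "valid = (\<lambda>i N (q::rat). i \<le> c N \<and> q * fact N \<in> \<int>)"
        have fk: "\<And>N M. N \<le> M \<Longrightarrow> (fact M :: rat) = fact N * of_nat (fact M div fact N :: nat)"
        proof -
          fix N M :: nat assume "N \<le> M"
          then have "fact M = (fact N * (fact M div fact N) :: nat)"
            using fact_dvd by (metis dvd_mult_div_cancel)
          then show "(fact M :: rat) = fact N * of_nat (fact M div fact N :: nat)"
            by (metis of_nat_fact of_nat_mult)
        qed
        have valid_mono: "\<And>i N M q. valid i N q \<Longrightarrow> N \<le> M \<Longrightarrow> valid i M q"
        proof -
          fix i N M q assume v: "valid i N q" and NM: "N \<le> M"
          have "q * fact M = (q * fact N) * of_nat (fact M div fact N :: nat)"
            using fk[OF NM] by simp
          then show "valid i M q" using v NM cmono unfolding valid_def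
            by (metis Ints_mult Ints_of_nat order_trans)
        qed
        have indep: "\<And>i N M q. valid i N q \<Longrightarrow> N \<le> M \<Longrightarrow> V i N q = V i M q"
        proof -
          fix i N M q assume v: "valid i N q" and NM: "N \<le> M"
          let ?k = "fact M div fact N :: nat"
          obtain a where a: "q * fact N = of_int a" using v unfolding valid_def by (meson Ints_cases)
          have b: "q * fact M = of_int (a * int ?k)" using fk[OF NM] a by simp
          have fa: "\<lfloor>q * fact N\<rfloor> = a" using a by simp
          have fb: "\<lfloor>q * fact M\<rfloor> = a * int ?k" using b by (simp only: floor_of_int)
          have iN: "i \<le> c N" using v unfolding valid_def by simp
          have uM: "u M \<in> carrier (G (c M))" by (rule uc)
          have pc: "u M [^]\<^bsub>G (c M)\<^esub> (int ?k * a) \<in> carrier (G (c M))"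
            using group.int_pow_closed[OF grp uM] by blast
          have "u N [^]\<^bsub>G (c N)\<^esub> a = \<phi> (c N) (c M) (u M [^]\<^bsub>G (c M)\<^esub> ?k) [^]\<^bsub>G (c N)\<^esub> a"
            using R[OF NM] by simp
          also have "\<dots> = \<phi> (c N) (c M) ((u M [^]\<^bsub>G (c M)\<^esub> ?k) [^]\<^bsub>G (c M)\<^esub> a)"
            using group_hom.hom_int_pow[OF gh[OF cmono[OF NM]]] uM
              monoid.nat_pow_closed[OF group.is_monoid[OF grp]] by metis
          also have "\<dots> = \<phi> (c N) (c M) (u M [^]\<^bsub>G (c M)\<^esub> (int ?k * a))"
            using group.int_pow_pow[OF grp uM, of "int ?k" a] int_pow_int by metis
          finally have "u N [^]\<^bsub>G (c N)\<^esub> a = \<phi> (c N) (c M) (u M [^]\<^bsub>G (c M)\<^esub> (int ?k * a))" .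
          then have "V i N q = \<phi> i (c N) (\<phi> (c N) (c M) (u M [^]\<^bsub>G (c M)\<^esub> (int ?k * a)))"
            unfolding V_def fa by simp
          also have "\<dots> = \<phi> i (c M) (u M [^]\<^bsub>G (c M)\<^esub> (int ?k * a))"
            using comp[OF iN cmono[OF NM] pc] .
          finally show "V i N q = V i M q" unfolding V_def fb by (simp add: mult.commute)
        qed
        have ex_valid: "\<And>i q N0. \<exists>N. N0 \<le> N \<and> valid i N q"
        proof -
          fix i and q :: rat and N0 :: nat
          obtain N1 where N1: "i \<le> c N1" using cof by blast
          obtain a b where ab: "quotient_of q = (a, b)" by (cases "quotient_of q") auto
          have bpos: "b > 0" using quotient_of_denom_pos[OF ab] .
          have qab: "q = of_int a / of_int b" using quotient_of_div[OF ab] .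
          define N where "N = max N0 (max N1 (nat b))"
          have "nat b dvd fact N" using bpos by (intro dvd_fact) (auto simp: N_def)
          then obtain t where t: "fact N = nat b * t" by blast
          have "(fact N :: rat) = of_int b * of_nat t"
            using t bpos by (metis of_nat_fact of_nat_mult of_int_of_nat_eq int_nat_eq less_imp_le
                   order_less_imp_not_less of_nat_nat)
          then have "q * fact N = of_int (a * int t)" using qab bpos by simp
          moreover have "c N1 \<le> c N" using cmono by (simp add: N_def)
          ultimately have "valid i N q" unfolding valid_def using N1 by (metis Ints_of_int order_trans)
          moreover have "N0 \<le> N" by (simp add: N_def)
          ultimately show "\<exists>N. N0 \<le> N \<and> valid i N q" by blast
        qed
        define F where "F = (\<lambda>i q. V i (SOME N. valid i N q) q)"
        have Fv: "\<And>i N q. valid i N q \<Longrightarrow> F i q = V i N q"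
        proof -
          fix i N q assume v: "valid i N q"
          let ?N = "SOME N. valid i N q"
          have v': "valid i ?N q" using v by (rule someI)
          have "V i ?N q = V i (max N ?N) q" using indep[OF v'] by simp
          also have "\<dots> = V i N q" using indep[OF v, of "max N ?N"] by simp
          finally show "F i q = V i N q" unfolding F_def .
        qed
        have Vc: "\<And>i N q. i \<le> c N \<Longrightarrow> V i N q \<in> carrier (G i)"
          unfolding V_def using cl uc group.int_pow_closed[OF grp] by blast
        define h where "h = (\<lambda>q i. F i q)"
        have hc: "\<And>q. h q \<in> carrier ?M"
        proof -
          fix q
          have comp_i: "\<And>i. h q i \<in> carrier (G i)"
          proof -
            fix i obtain N where "valid i N q" using ex_valid by blast
            then show "h q i \<in> carrier (G i)" unfolding h_def using Fv Vc unfolding valid_def by auto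
          qed
          have thr: "\<And>i j. i \<le> j \<Longrightarrow> \<phi> i j (h q j) = h q i"
          proof -
            fix i j :: 'i assume ij: "i \<le> j"
            obtain N where v: "valid j N q" using ex_valid by blast
            then have v': "valid i N q" using ij unfolding valid_def by (meson order_trans)
            have jN: "j \<le> c N" using v unfolding valid_def by simp
            have "\<phi> i j (V j N q) = V i N q" unfolding V_def
              using comp[OF ij jN] uc group.int_pow_closed[OF grp] by blast
            then show "\<phi> i j (h q j) = h q i" unfolding h_def using Fv[OF v] Fv[OF v'] by simp
          qed
          show "h q \<in> carrier ?M" unfolding S using comp_i thr by (auto simp: PiE_UNIV_domain)
        qed
        have hm: "\<And>q r. h (q + r) = h q \<otimes>\<^bsub>?M\<^esub> h r"
        proof -
          fix q r :: rat
          have "\<And>i. F i (q + r) = F i q \<otimes>\<^bsub>G i\<^esub> F i r"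
          proof -
            fix i
            obtain N1 where 1: "valid i N1 q" using ex_valid by blast
            obtain N2 where 2: "N1 \<le> N2 \<and> valid i N2 r" using ex_valid by blast
            obtain N where 3: "N2 \<le> N \<and> valid i N (q + r)" using ex_valid by blast
            have vq: "valid i N q" using 1 2 3 valid_mono by (meson order_trans)
            have vr: "valid i N r" using 2 3 valid_mono by blast
            have iN: "i \<le> c N" using 3 unfolding valid_def by simp
            obtain a where a: "q * fact N = of_int a" using vq unfolding valid_def by (meson Ints_cases)
            obtain b where b: "r * fact N = of_int b" using vr unfolding valid_def by (meson Ints_cases)
            have "(q + r) * fact N = of_int (a + b)" using a b by (simp add: distrib_right)
            then have fl: "\<lfloor>(q + r) * fact N\<rfloor> = \<lfloor>q * fact N\<rfloor> + \<lfloor>r * fact N\<rfloor>"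
              using a b by (simp only: floor_of_int)
            have "V i N (q + r) = V i N q \<otimes>\<^bsub>G i\<^esub> V i N r"
              unfolding V_def fl
              using group.int_pow_mult[OF grp uc] group_hom.hom_mult[OF gh[OF iN]]
                group.int_pow_closed[OF grp uc] by metis
            then show "F i (q + r) = F i q \<otimes>\<^bsub>G i\<^esub> F i r"
              using Fv[OF 3[THEN conjunct2]] Fv[OF vq] Fv[OF vr] by simp
          qed
          then show "h (q + r) = h q \<otimes>\<^bsub>?M\<^esub> h r"
            unfolding h_def by (simp add: inverse_limit_def restrict_def)
        qed
        have "h \<in> hom rational_group ?M"
          unfolding hom_def using hc hm by (auto simp: rational_group_def)
        moreover have "h 1 \<alpha> = x"
        proof -
          have v: "valid \<alpha> 0 1" unfolding valid_def using c0 by simp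
          have "V \<alpha> 0 1 = x" unfolding V_def using c0 u0 x idm group.int_pow_1[OF grp x] by simp
          then show ?thesis unfolding h_def using Fv[OF v] by simp
        qed
        ultimately show ?thesis by blast
      qed
      then obtain h where h: "h \<in> hom rational_group ?M" "h 1 \<alpha> = x" by blast
      have "h 1 \<in> ?H" using h(1) by (auto simp: rational_group_def)
      then have "h 1 \<in> divisible_part ?M" unfolding divisible_part_def by (rule generate.incl)
      then show "x \<in> (\<lambda>x. x \<alpha>) ` divisible_part ?M" using h(2) by force
    qed
  qed
qed

end
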